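(* Let $G=(V,E)$ be a finite connected graph. Let $(\sigma(x))_{x\in V}$ be i.i.d. $N(0,1)$ and consider the divisible sandpile $$s(x)=1+\sigma(x)-\frac{1}{|V|}\sum_{y\in V}\sigma(y).$$ Then $s$ stabilizes to the all $1$ configuration, and its odometer $u:V\to[0,\infty)$ satisfies $$(u(x))_{x\in V}\overset{d}{=}\big(\eta(x)-\min_{y\in V}\eta(y)\big)_{x\in V},$$ where $(\eta(x))_{x\in V}$ is jointly Gaussian with mean zero and covariance $$\mathbb{E}[\eta(x)\eta(y)]=\frac{1}{\deg(x)\deg(y)}\sum_{z\in V}g(z,x)g(z,y),$$ with $g(x,y)=\frac{1}{|V|}\sum_{z\in V}g^z(x,y)$ and $g^z(x,y)$ the expected number of visits to $y$ by simple random walk started at $x$ before hitting $z$.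
   Context: The graph Laplacian is $\Delta u(x)=\sum_{y\sim x}(u(y)-u(x))$. For $s:V\to\mathbb{R}$, let $\mathcal{F}_s=\{f:V\to\mathbb{R}: f\ge0,\ s+\Delta f\le1\}$; $s$ stabilizes if $\mathcal{F}_s\neq\emptyset$, its odometer is $u(x)=\inf\{f(x):f\in\mathcal{F}_s\}$, and "stabilizes to the all $1$ configuration" means $s+\Delta u\equiv 1$. *)

theory Defs
  imports "HOL-Probability.Probability"
begin

definition simple_graph :: "('a \<Rightarrow> 'a \<Rightarrow> bool) \<Rightarrow> bool" where
  "simple_graph E \<longleftrightarrow> (\<forall>x y. E x y \<longrightarrow> E y x) \<and> (\<forall>x. \<not> E x x)"

definition connected_graph :: "('a \<Rightarrow> 'a \<Rightarrow> bool) \<Rightarrow> bool" where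
  "connected_graph E \<longleftrightarrow> (\<forall>x y. E\<^sup>*\<^sup>* x y)"

definition deg :: "('a::finite \<Rightarrow> 'a \<Rightarrow> bool) \<Rightarrow> 'a \<Rightarrow> nat" where
  "deg E x = card {y. E x y}"

definition laplacian :: "('a::finite \<Rightarrow> 'a \<Rightarrow> bool) \<Rightarrow> ('a \<Rightarrow> real) \<Rightarrow> 'a \<Rightarrow> real" where
  "laplacian E f x = (\<Sum>y\<in>{y. E x y}. f y - f x)"

definition stab_set :: "('a::finite \<Rightarrow> 'a \<Rightarrow> bool) \<Rightarrow> ('a \<Rightarrow> real) \<Rightarrow> ('a \<Rightarrow> real) set" where
  "stab_set E s = {f. (\<forall>x. 0 \<le> f x) \<and> (\<forall>x. s x + laplacian E f x \<le> 1)}"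

definition stabilizes :: "('a::finite \<Rightarrow> 'a \<Rightarrow> bool) \<Rightarrow> ('a \<Rightarrow> real) \<Rightarrow> bool" where
  "stabilizes E s \<longleftrightarrow> stab_set E s \<noteq> {}"

definition odometer :: "('a::finite \<Rightarrow> 'a \<Rightarrow> bool) \<Rightarrow> ('a \<Rightarrow> real) \<Rightarrow> 'a \<Rightarrow> real" where
  "odometer E s x = Inf ((\<lambda>f. f x) ` stab_set E s)"

definition srw_P :: "('a::finite \<Rightarrow> 'a \<Rightarrow> bool) \<Rightarrow> 'a \<Rightarrow> 'a \<Rightarrow> real" where
  "srw_P E w y = (if E w y then 1 / real (deg E w) else 0)"

text \<open>killed_walk E z n x y = probability that the simple random walk started at x
  is at y at time n and has not visited z at any of the times 0,...,n.\<close>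
fun killed_walk :: "('a::finite \<Rightarrow> 'a \<Rightarrow> bool) \<Rightarrow> 'a \<Rightarrow> nat \<Rightarrow> 'a \<Rightarrow> 'a \<Rightarrow> real" where
  "killed_walk E z 0 x y = (if x = y \<and> y \<noteq> z then 1 else 0)"
| "killed_walk E z (Suc n) x y =
     (if y = z then 0 else (\<Sum>w\<in>UNIV. killed_walk E z n x w * srw_P E w y))"

text \<open>g^z(x,y): expected number of visits to y (at times n < T_z) by the simple random
  walk started at x before hitting z; by linearity this is the sum over n of killed_walk.\<close>
definition green_z :: "('a::finite \<Rightarrow> 'a \<Rightarrow> bool) \<Rightarrow> 'a \<Rightarrow> 'a \<Rightarrow> 'a \<Rightarrow> real" where
  "green_z E z x y = (\<Sum>n. killed_walk E z n x y)"

definition green :: "('a::finite \<Rightarrow> 'a \<Rightarrow> bool) \<Rightarrow> 'a \<Rightarrow> 'a \<Rightarrow> real" where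
  "green E x y = (1 / real CARD('a)) * (\<Sum>z\<in>UNIV. green_z E z x y)"

definition eta_cov :: "('a::finite \<Rightarrow> 'a \<Rightarrow> bool) \<Rightarrow> 'a \<Rightarrow> 'a \<Rightarrow> real" where
  "eta_cov E x y = (1 / (real (deg E x) * real (deg E y))) * (\<Sum>z\<in>UNIV. green E z x * green E z y)"

definition centered_gaussian_vector ::
  "'b measure \<Rightarrow> ('a::finite \<Rightarrow> 'b \<Rightarrow> real) \<Rightarrow> ('a \<Rightarrow> 'a \<Rightarrow> real) \<Rightarrow> bool" where
  "centered_gaussian_vector N \<eta> C \<longleftrightarrow> prob_space N \<and> (\<forall>x. \<eta> x \<in> borel_measurable N) \<and>
     (\<forall>t::'a \<Rightarrow> real. (\<integral>\<omega>. cis (\<Sum>x\<in>UNIV. t x * \<eta> x \<omega>) \<partial>N)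
        = complex_of_real (exp (- (\<Sum>x\<in>UNIV. \<Sum>y\<in>UNIV. t x * t y * C x y) / 2)))"

end

theory Submission
  imports Defs
begin

lemma borel_measurable_cis_comp[measurable]:
  "f \<in> borel_measurable M \<Longrightarrow> (\<lambda>x. cis (f x)) \<in> borel_measurable M"
  unfolding cis_conv_exp by measurable

lemma cis_sum_prod: "finite A \<Longrightarrow> cis (sum f A) = (\<Prod>i\<in>A. cis (f i))"
  by (induction rule: finite_induct) (auto simp: cis_mult[symmetric])

lemma gauss_char_lincomb:
  fixes M :: "'b measure" and \<sigma> :: "'a::finite \<Rightarrow> 'b \<Rightarrow> real" and c :: "'a \<Rightarrow> real"
  assumes P: "prob_space M"
    and indep: "prob_space.indep_vars M (\<lambda>_. borel) \<sigma> UNIV"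
    and normal: "\<And>x. distributed M lborel (\<sigma> x) std_normal_density"
  shows "(\<integral>\<omega>. cis (\<Sum>x\<in>UNIV. c x * \<sigma> x \<omega>) \<partial>M) = complex_of_real (exp (- (\<Sum>x\<in>UNIV. (c x)^2) / 2))"
proof -
  interpret prob_space M by (rule P)
  have meas[measurable]: "\<sigma> x \<in> borel_measurable M" for x
    using normal[of x] by (simp add: distributed_def)
  have ind2: "indep_vars (\<lambda>_. borel) (\<lambda>x \<omega>. cis (c x * \<sigma> x \<omega>)) UNIV"
    by (rule indep_vars_compose2[OF indep]) (intro borel_measurable_continuous_onI continuous_intros)
  have one: "(\<integral>\<omega>. cis (c x * \<sigma> x \<omega>) \<partial>M) = complex_of_real (exp (- ((c x)^2) / 2))" for x
  proof -
    have "(\<integral>\<omega>. cis (c x * \<sigma> x \<omega>) \<partial>M) = (\<integral>y. cis (c x * y) \<partial>distr M lborel (\<sigma> x))"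
      by (subst integral_distr) (auto)
    also have "distr M lborel (\<sigma> x) = std_normal_distribution"
      using normal[of x] by (simp add: distributed_def)
    also have "(\<integral>y. cis (c x * y) \<partial>std_normal_distribution) = char std_normal_distribution (c x)"
      by (simp add: char_def cis_conv_exp)
    finally show ?thesis by (simp add: char_std_normal_distribution)
  qed
  have "(\<integral>\<omega>. cis (\<Sum>x\<in>UNIV. c x * \<sigma> x \<omega>) \<partial>M) = (\<integral>\<omega>. (\<Prod>x\<in>UNIV. cis (c x * \<sigma> x \<omega>)) \<partial>M)"
    by (simp add: cis_sum_prod)
  also have "\<dots> = (\<Prod>x\<in>UNIV. \<integral>\<omega>. cis (c x * \<sigma> x \<omega>) \<partial>M)"
    by (rule indep_vars_lebesgue_integral[OF _ ind2]) (auto intro!: integrable_const_bound[where B=1])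
  also have "\<dots> = (\<Prod>x\<in>UNIV. complex_of_real (exp (- ((c x)^2) / 2)))"
    by (simp add: one)
  also have "\<dots> = complex_of_real (exp (- (\<Sum>x\<in>UNIV. (c x)^2) / 2))"
  proof -
    have "(\<Sum>x\<in>UNIV. - ((c x)^2 / 2)) = - ((\<Sum>x\<in>UNIV. (c x)^2) / 2)"
      by (simp add: sum_negf sum_divide_distrib)
    then show ?thesis
      by (simp add: of_real_prod[symmetric] exp_sum[symmetric])
  qed
  finally show ?thesis .
qed

inductive TP1 :: "(real \<Rightarrow> complex) \<Rightarrow> bool" where
  TP1_cis: "TP1 (\<lambda>y. cis (w * y))"
| TP1_scale: "TP1 f \<Longrightarrow> TP1 (\<lambda>y. c * f y)"
| TP1_add: "TP1 f \<Longrightarrow> TP1 g \<Longrightarrow> TP1 (\<lambda>y. f y + g y)"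

lemma TP1_mult: "TP1 f \<Longrightarrow> TP1 g \<Longrightarrow> TP1 (\<lambda>y. f y * g y)"
proof (induction rule: TP1.induct)
  case (TP1_cis w)
  show ?case using TP1_cis
  proof (induction rule: TP1.induct)
    case (TP1_cis w')
    have "(\<lambda>y. cis (w * y) * cis (w' * y)) = (\<lambda>y. cis ((w + w') * y))"
      by (simp add: cis_mult distrib_right)
    then show ?case by (simp add: TP1.TP1_cis)
  next
    case (TP1_scale f c)
    then show ?case using TP1.TP1_scale[of _ c] by (simp add: mult.left_commute)
  next
    case (TP1_add f g)
    then show ?case using TP1.TP1_add by (simp add: distrib_left)
  qed
next
  case (TP1_scale f c)
  then show ?case using TP1.TP1_scale[of _ c] by (simp add: mult.assoc)
next
  case (TP1_add f1 f2)
  then show ?case using TP1.TP1_add by (simp add: distrib_right)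
qed

lemma TP1_const: "TP1 (\<lambda>y. c)"
  using TP1_scale[OF TP1_cis[of 0], of c] by simp

lemma TP1_sin: "TP1 (\<lambda>y. complex_of_real (sin (y / L)))"
proof -
  have eq: "(\<lambda>y. complex_of_real (sin (y / L))) = (\<lambda>y. (- \<i> / 2) * cis ((1 / L) * y) + (\<i> / 2) * cis ((- 1 / L) * y))"
    by (rule ext) (simp add: complex_eq_iff cis.sel)
  show ?thesis unfolding eq by (intro TP1_add TP1_scale TP1_cis)
qed

lemma TP1_poly_sin:
  "real_polynomial_function g \<Longrightarrow> TP1 (\<lambda>y. complex_of_real (g (sin (y / L))))"
proof (induction rule: real_polynomial_function.induct)
  case (linear f)
  then obtain c where "f = (\<lambda>x. x * c)" using real_bounded_linear by blast
  then show ?case using TP1_scale[OF TP1_sin, of "complex_of_real c" L] by (simp add: mult.commute)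
next
  case (const c)
  then show ?case by (rule TP1_const)
next
  case (add f g)
  then show ?case using TP1_add by simp
next
  case (mult f g)
  then show ?case using TP1_mult by simp
qed

lemma trig_approx1:
  fixes \<phi> :: "real \<Rightarrow> real"
  assumes cont: "continuous_on UNIV \<phi>" and bnd: "\<And>y. \<bar>\<phi> y\<bar> \<le> 1" and L: "L > 0" and e: "e > 0"
  shows "\<exists>p. TP1 p \<and> (\<forall>y. \<bar>y\<bar> \<le> pi * L / 2 \<longrightarrow> norm (complex_of_real (\<phi> y) - p y) \<le> e)
              \<and> (\<forall>y. norm (p y) \<le> 1 + e)"
proof -
  define \<psi> where "\<psi> s = \<phi> (L * arcsin s)" for s
  have "continuous_on {-1..1} \<psi>"
    unfolding \<psi>_def
    by (intro continuous_on_compose2[OF cont] continuous_intros) auto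
  then obtain g where g: "real_polynomial_function g" "\<And>s. s \<in> {-1..1} \<Longrightarrow> \<bar>\<psi> s - g s\<bar> < e"
    using Stone_Weierstrass_real_polynomial_function[of "{-1..1::real}" \<psi> e] e by auto
  define p where "p y = complex_of_real (g (sin (y / L)))" for y
  have "TP1 p" unfolding p_def by (rule TP1_poly_sin[OF g(1)])
  moreover have "norm (complex_of_real (\<phi> y) - p y) \<le> e" if "\<bar>y\<bar> \<le> pi * L / 2" for y
  proof -
    have "- (pi/2) \<le> y / L" "y / L \<le> pi / 2" using that L by (auto simp: field_simps abs_le_iff)
    then have "arcsin (sin (y / L)) = y / L" by (rule arcsin_sin)
    then have "\<psi> (sin (y / L)) = \<phi> y" using L by (simp add: \<psi>_def)
    moreover have "\<bar>\<psi> (sin (y / L)) - g (sin (y / L))\<bar> < e"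
      by (intro g(2)) (auto simp: sin_ge_minus_one)
    ultimately show ?thesis
      by (simp add: p_def norm_of_real[symmetric] of_real_diff[symmetric] del: of_real_diff)
  qed
  moreover have "norm (p y) \<le> 1 + e" for y
  proof -
    have "\<bar>\<psi> (sin (y / L)) - g (sin (y / L))\<bar> < e"
      by (intro g(2)) (auto simp: sin_ge_minus_one)
    moreover have "\<bar>\<psi> (sin (y / L))\<bar> \<le> 1" unfolding \<psi>_def by (rule bnd)
    ultimately show ?thesis by (simp add: p_def)
  qed
  ultimately show ?thesis by blast
qed

inductive TP :: "(('a::finite \<Rightarrow> real) \<Rightarrow> complex) \<Rightarrow> bool" where
  TP_cis: "TP (\<lambda>v. cis (\<Sum>x\<in>UNIV. t x * v x))"
| TP_scale: "TP f \<Longrightarrow> TP (\<lambda>v. c * f v)"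
| TP_add: "TP f \<Longrightarrow> TP g \<Longrightarrow> TP (\<lambda>v. f v + g v)"

lemma TP_mult: "TP f \<Longrightarrow> TP g \<Longrightarrow> TP (\<lambda>v. f v * g v)"
proof (induction rule: TP.induct)
  case (TP_cis t)
  show ?case using TP_cis
  proof (induction rule: TP.induct)
    case (TP_cis t')
    have "(\<lambda>v. cis (\<Sum>x\<in>UNIV. t x * v x) * cis (\<Sum>x\<in>UNIV. t' x * v x))
        = (\<lambda>v. cis (\<Sum>x\<in>UNIV. (t x + t' x) * v x))"
      by (simp add: cis_mult distrib_right sum.distrib)
    then show ?case by (simp add: TP.TP_cis)
  next
    case (TP_scale f c)
    then show ?case using TP.TP_scale[of _ c] by (simp add: mult.left_commute)
  next
    case (TP_add f g)
    then show ?case using TP.TP_add by (simp add: distrib_left)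
  qed
next
  case (TP_scale f c)
  then show ?case using TP.TP_scale[of _ c] by (simp add: mult.assoc)
next
  case (TP_add f1 f2)
  then show ?case using TP.TP_add by (simp add: distrib_right)
qed

lemma TP_one: "TP (\<lambda>v. 1)"
  using TP_cis[of "\<lambda>_. 0"] by simp

lemma TP_coord: "TP1 p \<Longrightarrow> TP (\<lambda>v. p (v x))"
proof (induction rule: TP1.induct)
  case (TP1_cis w)
  have "(\<lambda>v. cis (w * v x)) = (\<lambda>v. cis (\<Sum>z\<in>UNIV. (if z = x then w else 0) * v z))"
  proof (rule ext)
    fix v :: "'a \<Rightarrow> real"
    have "(\<Sum>z\<in>UNIV. (if z = x then w else 0) * v z) = (\<Sum>z\<in>UNIV. if z = x then w * v z else 0)"
      by (rule sum.cong) auto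
    then show "cis (w * v x) = cis (\<Sum>z\<in>UNIV. (if z = x then w else 0) * v z)" by simp
  qed
  then show ?case by (simp add: TP_cis)
next
  case (TP1_scale f c)
  then show ?case using TP_scale by blast
next
  case (TP1_add f g)
  then show ?case using TP_add by blast
qed

lemma TP_prod: "finite A \<Longrightarrow> (\<And>x. x \<in> A \<Longrightarrow> TP (F x)) \<Longrightarrow> TP (\<lambda>v. \<Prod>x\<in>A. F x v)"
  by (induction rule: finite_induct) (auto intro: TP_one TP_mult)

lemma TP_bdd_meas: "TP f \<Longrightarrow> (\<exists>B. \<forall>v. norm (f v) \<le> B) \<and> f \<in> borel_measurable (Pi\<^sub>M UNIV (\<lambda>_. borel))"
proof (induction rule: TP.induct)
  case (TP_cis t)
  then show ?case by (auto intro!: exI[of _ 1])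
next
  case (TP_scale f c)
  then obtain B where "\<forall>v. norm (f v) \<le> B" by auto
  then have "\<forall>v. norm (c * f v) \<le> norm c * B" by (simp add: norm_mult mult_left_mono)
  with TP_scale show ?case by auto
next
  case (TP_add f g)
  then obtain B B' where "\<forall>v. norm (f v) \<le> B" "\<forall>v. norm (g v) \<le> B'" by auto
  then have "\<forall>v. norm (f v + g v) \<le> B + B'" by (meson add_mono norm_triangle_le)
  with TP_add show ?case by auto
qed

lemma TP_int_eq:
  fixes \<mu> \<nu> :: "('a::finite \<Rightarrow> real) measure"
  assumes P: "prob_space \<mu>" "prob_space \<nu>"
    and S: "sets \<mu> = sets (Pi\<^sub>M UNIV (\<lambda>_. borel))" "sets \<nu> = sets (Pi\<^sub>M UNIV (\<lambda>_. borel))"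
    and ch: "\<And>t. (\<integral>v. cis (\<Sum>x\<in>UNIV. t x * v x) \<partial>\<mu>) = (\<integral>v. cis (\<Sum>x\<in>UNIV. t x * v x) \<partial>\<nu>)"
    and f: "TP f"
  shows "(\<integral>v. f v \<partial>\<mu>) = (\<integral>v. f v \<partial>\<nu>)"
proof -
  have int: "integrable \<mu> g \<and> integrable \<nu> g" if tg: "TP g" for g
  proof -
    obtain B where B: "\<forall>v. norm (g v) \<le> B" and m: "g \<in> borel_measurable (Pi\<^sub>M UNIV (\<lambda>_. borel))"
      using TP_bdd_meas[OF tg] by auto
    interpret p1: prob_space \<mu> by (rule P(1))
    interpret p2: prob_space \<nu> by (rule P(2))
    have "g \<in> borel_measurable \<mu>" "g \<in> borel_measurable \<nu>"
      using m measurable_cong_sets[OF S(1) refl] measurable_cong_sets[OF S(2) refl] by auto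
    then show ?thesis using B
      by (auto intro!: p1.integrable_const_bound[where B=B] p2.integrable_const_bound[where B=B])
  qed
  show ?thesis using f
  proof (induction rule: TP.induct)
    case (TP_cis t)
    then show ?case by (rule ch)
  next
    case (TP_scale f c)
    then show ?case by simp
  next
    case (TP_add f g)
    then show ?case using int[OF TP_add(1)] int[OF TP_add(2)] by simp
  qed
qed

lemma space_PiM_UNIV_borel[simp]: "space (Pi\<^sub>M UNIV (\<lambda>_. borel :: real measure)) = UNIV"
  by (simp add: space_PiM)

lemma prod_diff_bound:
  fixes a b :: "'i \<Rightarrow> complex"
  assumes "finite A" "\<And>x. x \<in> A \<Longrightarrow> norm (a x) \<le> K" "\<And>x. x \<in> A \<Longrightarrow> norm (b x) \<le> K" "1 \<le> K"
  shows "norm ((\<Prod>x\<in>A. a x) - (\<Prod>x\<in>A. b x)) \<le> K ^ card A * (\<Sum>x\<in>A. norm (a x - b x))"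
  using assms
proof (induction rule: finite_induct)
  case empty
  then show ?case by simp
next
  case (insert i A)
  have IH: "norm ((\<Prod>x\<in>A. a x) - (\<Prod>x\<in>A. b x)) \<le> K ^ card A * (\<Sum>x\<in>A. norm (a x - b x))"
    using insert by auto
  have nb: "norm (\<Prod>x\<in>A. b x) \<le> K ^ card A"
    using insert(5,6) by (auto simp: prod_norm[symmetric] intro!: prod_le_power)
  have ai: "norm (a i) \<le> K" using insert by auto
  have "(\<Prod>x\<in>insert i A. a x) - (\<Prod>x\<in>insert i A. b x)
      = a i * ((\<Prod>x\<in>A. a x) - (\<Prod>x\<in>A. b x)) + (a i - b i) * (\<Prod>x\<in>A. b x)"
    using insert by (simp add: algebra_simps)
  then have "norm ((\<Prod>x\<in>insert i A. a x) - (\<Prod>x\<in>insert i A. b x))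
      \<le> norm (a i) * norm ((\<Prod>x\<in>A. a x) - (\<Prod>x\<in>A. b x)) + norm (a i - b i) * norm (\<Prod>x\<in>A. b x)"
    by (metis norm_mult norm_triangle_ineq)
  also have "\<dots> \<le> K * (K ^ card A * (\<Sum>x\<in>A. norm (a x - b x))) + norm (a i - b i) * K ^ card A"
    using insert(6) by (intro add_mono mult_mono IH ai nb) auto
  also have "\<dots> \<le> K ^ card (insert i A) * (\<Sum>x\<in>insert i A. norm (a x - b x))"
  proof -
    have "norm (a i - b i) * K ^ card A \<le> norm (a i - b i) * K ^ Suc (card A)"
      using insert(6) by (intro mult_left_mono) (auto intro: power_increasing)
    then show ?thesis using insert by (simp add: algebra_simps)
  qed
  finally show ?case .
qed

lemma tight_out:
  fixes \<mu> :: "('a::finite \<Rightarrow> real) measure"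
  assumes P: "prob_space \<mu>" and S: "sets \<mu> = sets (Pi\<^sub>M UNIV (\<lambda>_. borel))" and e: "e > 0"
  shows "\<exists>k::nat. measure \<mu> {v. \<exists>x. real k + 1 < \<bar>v x\<bar>} \<le> e"
proof -
  interpret prob_space \<mu> by (rule P)
  define A where "A k = {v::'a\<Rightarrow>real. \<exists>x. real k + 1 < \<bar>v x\<bar>}" for k :: nat
  have sA: "A k \<in> sets \<mu>" for k
  proof -
    have "A k = (\<Union>x. {v \<in> space (Pi\<^sub>M UNIV (\<lambda>_. borel)). real k + 1 < \<bar>v x\<bar>})"
      by (auto simp: A_def)
    also have "\<dots> \<in> sets (Pi\<^sub>M UNIV (\<lambda>_. borel))" by measurable
    finally show ?thesis using S by simp
  qed
  have dec: "decseq A"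
  proof (rule decseq_SucI)
    fix k show "A (Suc k) \<subseteq> A k" unfolding A_def
    proof clarify
      fix v x assume "real (Suc k) + 1 < \<bar>v x\<bar>"
      then have "real k + 1 < \<bar>v x\<bar>" by simp
      then show "\<exists>x. real k + 1 < \<bar>v x\<bar>" by blast
    qed
  qed
  have empty: "(\<Inter>k. A k) = {}"
  proof safe
    fix v assume v: "v \<in> (\<Inter>k. A k)"
    define k where "k = nat \<lceil>\<Sum>x\<in>UNIV. \<bar>v x\<bar>\<rceil>"
    have kb: "\<bar>v x\<bar> \<le> real k" for x
    proof -
      have "\<bar>v x\<bar> \<le> (\<Sum>x\<in>UNIV. \<bar>v x\<bar>)" by (rule member_le_sum) auto
      also have "\<dots> \<le> real k" unfolding k_def by linarith
      finally show ?thesis .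
    qed
    from v have "v \<in> A k" by auto
    then obtain x where "real k + 1 < \<bar>v x\<bar>" by (auto simp: A_def)
    with kb[of x] show "v \<in> {}" by linarith
  qed
  have "(\<lambda>k. measure \<mu> (A k)) \<longlonglongrightarrow> measure \<mu> (\<Inter>k. A k)"
    using sA dec by (intro finite_Lim_measure_decseq) auto
  then have "(\<lambda>k. measure \<mu> (A k)) \<longlonglongrightarrow> 0" by (simp add: empty)
  from order_tendstoD(2)[OF this e] obtain k where "measure \<mu> (A k) < e"
    by (auto simp: eventually_sequentially)
  then show ?thesis unfolding A_def by (auto intro: less_imp_le)
qed

lemma approx_int:
  fixes \<mu> :: "('a::finite \<Rightarrow> real) measure" and F G :: "('a \<Rightarrow> real) \<Rightarrow> complex"
  assumes P: "prob_space \<mu>" and S: "sets \<mu> = sets (Pi\<^sub>M UNIV (\<lambda>_. borel))"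
    and Fm: "F \<in> borel_measurable (Pi\<^sub>M UNIV (\<lambda>_. borel))" and FB: "\<And>v. norm (F v) \<le> B1"
    and Gm: "G \<in> borel_measurable (Pi\<^sub>M UNIV (\<lambda>_. borel))" and GB: "\<And>v. norm (G v) \<le> B2"
    and Out: "Out \<in> sets (Pi\<^sub>M UNIV (\<lambda>_. borel))" and ab: "0 \<le> a" "0 \<le> b"
    and pt: "\<And>v. norm (F v - G v) \<le> a + b * indicator Out v"
  shows "norm ((\<integral>v. F v \<partial>\<mu>) - (\<integral>v. G v \<partial>\<mu>)) \<le> a + b * measure \<mu> Out"
proof -
  interpret prob_space \<mu> by (rule P)
  have Fm': "F \<in> borel_measurable \<mu>" and Gm': "G \<in> borel_measurable \<mu>"
    using Fm Gm measurable_cong_sets[OF S refl] by auto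
  have Out': "Out \<in> sets \<mu>" using Out S by simp
  have iF: "integrable \<mu> F" using Fm' FB by (intro integrable_const_bound[where B=B1]) auto
  have iG: "integrable \<mu> G" using Gm' GB by (intro integrable_const_bound[where B=B2]) auto
  have "norm ((\<integral>v. F v \<partial>\<mu>) - (\<integral>v. G v \<partial>\<mu>)) = norm (\<integral>v. F v - G v \<partial>\<mu>)"
    using iF iG by simp
  also have "\<dots> \<le> (\<integral>v. norm (F v - G v) \<partial>\<mu>)" by (rule integral_norm_bound)
  also have "\<dots> \<le> (\<integral>v. a + b * indicator Out v \<partial>\<mu>)"
  proof (rule integral_mono)
    show "integrable \<mu> (\<lambda>v. a + b * indicator Out v)"
      using Out' by (intro Bochner_Integration.integrable_add integrable_const Bochner_Integration.integrable_mult_right integrable_real_indicator) (auto simp: emeasure_eq_measure)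
  qed (use iF iG pt in auto)
  also have "\<dots> = a + b * measure \<mu> Out"
  proof -
    have i1: "integrable \<mu> (\<lambda>v. b * indicator Out v :: real)"
      using Out' by (intro Bochner_Integration.integrable_mult_right integrable_real_indicator) (auto simp: emeasure_eq_measure)
    have "(\<integral>v. a + b * indicator Out v \<partial>\<mu>) = (\<integral>v. a \<partial>\<mu>) + (\<integral>v. b * indicator Out v \<partial>\<mu>)"
      using i1 by (intro Bochner_Integration.integral_add) auto
    then show ?thesis using Out' by (simp add: prob_space sets.Int_space_eq2)
  qed
  finally show ?thesis .
qed

lemma prod_test_eq:
  fixes \<mu> \<nu> :: "('a::finite \<Rightarrow> real) measure" and \<phi> :: "'a \<Rightarrow> real \<Rightarrow> real"
  assumes P: "prob_space \<mu>" "prob_space \<nu>"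
    and S: "sets \<mu> = sets (Pi\<^sub>M UNIV (\<lambda>_. borel))" "sets \<nu> = sets (Pi\<^sub>M UNIV (\<lambda>_. borel))"
    and ch: "\<And>t. (\<integral>v. cis (\<Sum>x\<in>UNIV. t x * v x) \<partial>\<mu>) = (\<integral>v. cis (\<Sum>x\<in>UNIV. t x * v x) \<partial>\<nu>)"
    and cont: "\<And>x. continuous_on UNIV (\<phi> x)" and b0: "\<And>x y. 0 \<le> \<phi> x y" and b1: "\<And>x y. \<phi> x y \<le> 1"
  shows "(\<integral>v. (\<Prod>x\<in>UNIV. \<phi> x (v x)) \<partial>\<mu>) = (\<integral>v. (\<Prod>x\<in>UNIV. \<phi> x (v x)) \<partial>\<nu>)"
proof -
  define n where "n = real CARD('a)"
  define K where "K = (2::real) ^ CARD('a)"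
  have K1: "1 \<le> K" unfolding K_def by simp
  have n0: "0 \<le> n" unfolding n_def by simp
  define F where "F v = complex_of_real (\<Prod>x\<in>UNIV. \<phi> x (v x))" for v :: "'a \<Rightarrow> real"
  have phim[measurable]: "\<phi> x \<in> borel_measurable borel" for x
    using cont by (intro borel_measurable_continuous_onI) auto
  have Fm: "F \<in> borel_measurable (Pi\<^sub>M UNIV (\<lambda>_. borel))" unfolding F_def by measurable
  have Fb: "norm (F v) \<le> 1" for v
  proof -
    have "0 \<le> (\<Prod>x\<in>UNIV. \<phi> x (v x))" "(\<Prod>x\<in>UNIV. \<phi> x (v x)) \<le> 1"
      using b0 b1 by (auto intro!: prod_le_1 prod_nonneg)
    then show ?thesis unfolding F_def norm_of_real by linarith
  qed
  have key: "norm ((\<integral>v. F v \<partial>\<mu>) - (\<integral>v. F v \<partial>\<nu>)) \<le> 2 * (K * n * e) + 2 * ((1 + K) * \<epsilon>)"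
    if e: "0 < e" "e \<le> 1" and eps: "0 < \<epsilon>" for e \<epsilon>
  proof -
    obtain k1 where k1: "measure \<mu> {v. \<exists>x. real k1 + 1 < \<bar>v x\<bar>} \<le> \<epsilon>"
      using tight_out[OF P(1) S(1) eps] by auto
    obtain k2 where k2: "measure \<nu> {v. \<exists>x. real k2 + 1 < \<bar>v x\<bar>} \<le> \<epsilon>"
      using tight_out[OF P(2) S(2) eps] by auto
    define R where "R = real (max k1 k2) + 1"
    define Out where "Out = {v::'a\<Rightarrow>real. \<exists>x. R < \<bar>v x\<bar>}"
    have Om: "Out \<in> sets (Pi\<^sub>M UNIV (\<lambda>_. borel))"
    proof -
      have "Out = (\<Union>x. {v \<in> space (Pi\<^sub>M UNIV (\<lambda>_. borel)). R < \<bar>v x\<bar>})"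
        by (auto simp: Out_def)
      also have "\<dots> \<in> sets (Pi\<^sub>M UNIV (\<lambda>_. borel))" by measurable
      finally show ?thesis .
    qed
    have Oa: "measure \<mu> Out \<le> \<epsilon>"
    proof -
      interpret prob_space \<mu> by (rule P(1))
      have "Out \<subseteq> {v. \<exists>x. real k1 + 1 < \<bar>v x\<bar>}" unfolding Out_def R_def
      proof clarify
        fix v x assume "real (max k1 k2) + 1 < \<bar>v x\<bar>"
        then have "real k1 + 1 < \<bar>v x\<bar>" by (simp add: max_def split: if_splits)
        then show "\<exists>x. real k1 + 1 < \<bar>v x\<bar>" by blast
      qed
      moreover have "{v. \<exists>x. real k1 + 1 < \<bar>v x\<bar>} \<in> sets \<mu>"
      proof -
        have "{v::'a\<Rightarrow>real. \<exists>x. real k1 + 1 < \<bar>v x\<bar>} = (\<Union>x. {v \<in> space (Pi\<^sub>M UNIV (\<lambda>_. borel)). real k1 + 1 < \<bar>v x\<bar>})"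
          by auto
        also have "\<dots> \<in> sets (Pi\<^sub>M UNIV (\<lambda>_. borel))" by measurable
        finally show ?thesis using S(1) by simp
      qed
      ultimately have "measure \<mu> Out \<le> measure \<mu> {v. \<exists>x. real k1 + 1 < \<bar>v x\<bar>}"
        by (intro finite_measure_mono) auto
      then show ?thesis using k1 by simp
    qed
    have Ob: "measure \<nu> Out \<le> \<epsilon>"
    proof -
      interpret prob_space \<nu> by (rule P(2))
      have "Out \<subseteq> {v. \<exists>x. real k2 + 1 < \<bar>v x\<bar>}" unfolding Out_def R_def
      proof clarify
        fix v x assume "real (max k1 k2) + 1 < \<bar>v x\<bar>"
        then have "real k2 + 1 < \<bar>v x\<bar>" by (simp add: max_def split: if_splits)
        then show "\<exists>x. real k2 + 1 < \<bar>v x\<bar>" by blast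
      qed
      moreover have "{v. \<exists>x. real k2 + 1 < \<bar>v x\<bar>} \<in> sets \<nu>"
      proof -
        have "{v::'a\<Rightarrow>real. \<exists>x. real k2 + 1 < \<bar>v x\<bar>} = (\<Union>x. {v \<in> space (Pi\<^sub>M UNIV (\<lambda>_. borel)). real k2 + 1 < \<bar>v x\<bar>})"
          by auto
        also have "\<dots> \<in> sets (Pi\<^sub>M UNIV (\<lambda>_. borel))" by measurable
        finally show ?thesis using S(2) by simp
      qed
      ultimately have "measure \<nu> Out \<le> measure \<nu> {v. \<exists>x. real k2 + 1 < \<bar>v x\<bar>}"
        by (intro finite_measure_mono) auto
      then show ?thesis using k2 by simp
    qed
    define L where "L = 2 * R / pi"
    have R0: "R > 0" unfolding R_def by simp
    have L0: "L > 0" unfolding L_def using R0 by simp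
    have LR: "pi * L / 2 = R" unfolding L_def by simp
    have "\<forall>x. \<exists>p. TP1 p \<and> (\<forall>y. \<bar>y\<bar> \<le> pi * L / 2 \<longrightarrow> norm (complex_of_real (\<phi> x y) - p y) \<le> e)
              \<and> (\<forall>y. norm (p y) \<le> 1 + e)"
      using trig_approx1[OF cont _ L0 e(1)] b0 b1 by (metis abs_of_nonneg)
    then obtain p where p: "\<And>x. TP1 (p x)"
      "\<And>x y. \<bar>y\<bar> \<le> R \<Longrightarrow> norm (complex_of_real (\<phi> x y) - p x y) \<le> e"
      "\<And>x y. norm (p x y) \<le> 1 + e"
      unfolding LR by metis
    define G where "G v = (\<Prod>x\<in>UNIV. p x (v x))" for v :: "'a \<Rightarrow> real"
    have TPG: "TP G" unfolding G_def by (intro TP_prod TP_coord p) auto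
    obtain BG where BG: "\<And>v. norm (G v) \<le> BG" and Gm: "G \<in> borel_measurable (Pi\<^sub>M UNIV (\<lambda>_. borel))"
      using TP_bdd_meas[OF TPG] by auto
    have pt: "norm (F v - G v) \<le> K * n * e + (1 + K) * indicator Out v" for v
    proof (cases "v \<in> Out")
      case True
      have "norm (G v) \<le> K" unfolding G_def K_def
        using p(3) e by (auto simp: prod_norm[symmetric] intro!: prod_le_power order.trans[OF p(3)])
      then have "norm (F v - G v) \<le> 1 + K" using Fb[of v] by (meson add_mono norm_triangle_ineq4 order.trans)
      moreover have "0 \<le> K * n * e" using K1 n0 e by simp
      ultimately show ?thesis using True by simp
    next
      case False
      then have vR: "\<bar>v x\<bar> \<le> R" for x unfolding Out_def by (auto simp: not_less)
      have "F v = (\<Prod>x\<in>UNIV. complex_of_real (\<phi> x (v x)))" unfolding F_def by simp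
      then have "norm (F v - G v) \<le> 2 ^ card (UNIV::'a set) * (\<Sum>x\<in>UNIV. norm (complex_of_real (\<phi> x (v x)) - p x (v x)))"
        unfolding G_def using b0 b1 e
        by (auto intro!: prod_diff_bound order.trans[OF p(3)] order.trans[OF b1])
      also have "\<dots> \<le> K * (n * e)"
      proof -
        have "(\<Sum>x\<in>UNIV. norm (complex_of_real (\<phi> x (v x)) - p x (v x))) \<le> (\<Sum>x\<in>(UNIV::'a set). e)"
          by (intro sum_mono p(2) vR)
        then show ?thesis unfolding K_def n_def by (intro mult_left_mono) auto
      qed
      finally show ?thesis using False by simp
    qed
    have aK: "0 \<le> K * n * e" using K1 n0 e by simp
    have ineq: "norm ((\<integral>v. F v \<partial>\<mu>) - (\<integral>v. G v \<partial>\<mu>)) \<le> K * n * e + (1 + K) * measure \<mu> Out"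
      by (rule approx_int[OF P(1) S(1) Fm Fb Gm BG Om aK _ pt]) (use K1 in simp)
    have ineq2: "norm ((\<integral>v. F v \<partial>\<nu>) - (\<integral>v. G v \<partial>\<nu>)) \<le> K * n * e + (1 + K) * measure \<nu> Out"
      by (rule approx_int[OF P(2) S(2) Fm Fb Gm BG Om aK _ pt]) (use K1 in simp)
    have Geq: "(\<integral>v. G v \<partial>\<mu>) = (\<integral>v. G v \<partial>\<nu>)" by (rule TP_int_eq[OF P S ch TPG])
    have "norm ((\<integral>v. F v \<partial>\<mu>) - (\<integral>v. F v \<partial>\<nu>))
        \<le> norm ((\<integral>v. F v \<partial>\<mu>) - (\<integral>v. G v \<partial>\<mu>)) + norm ((\<integral>v. F v \<partial>\<nu>) - (\<integral>v. G v \<partial>\<nu>))"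
      using Geq by (metis norm_diff_triangle_le norm_minus_commute order_refl)
    also have "\<dots> \<le> (K * n * e + (1 + K) * \<epsilon>) + (K * n * e + (1 + K) * \<epsilon>)"
      using ineq ineq2 Oa Ob K1 by (smt (verit) mult_left_mono)
    finally show ?thesis by (simp add: algebra_simps)
  qed
  have "(\<integral>v. F v \<partial>\<mu>) = (\<integral>v. F v \<partial>\<nu>)"
  proof (rule ccontr)
    assume "(\<integral>v. F v \<partial>\<mu>) \<noteq> (\<integral>v. F v \<partial>\<nu>)"
    then have d: "norm ((\<integral>v. F v \<partial>\<mu>) - (\<integral>v. F v \<partial>\<nu>)) > 0" by simp
    define d' where "d' = norm ((\<integral>v. F v \<partial>\<mu>) - (\<integral>v. F v \<partial>\<nu>))"
    define e where "e = min 1 (d' / (4 * (K * n + 1)))"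
    define \<epsilon> where "\<epsilon> = d' / (8 * (1 + K))"
    have d'0: "d' > 0" using d unfolding d'_def .
    have Kn: "0 \<le> K * n" using K1 n0 by simp
    have e0: "0 < e" "e \<le> 1" unfolding e_def using d'0 Kn by auto
    have eps0: "0 < \<epsilon>" unfolding \<epsilon>_def using d'0 K1 by simp
    have pos: "0 < 4 * (K * n + 1)" using Kn by simp
    have "e \<le> d' / (4 * (K * n + 1))" unfolding e_def by simp
    then have "e * (4 * (K * n + 1)) \<le> d'" by (simp only: pos_le_divide_eq[OF pos])
    moreover have "e * (4 * (K * n + 1)) = 4 * (K * n * e) + 4 * e" by (simp add: algebra_simps)
    ultimately have t1: "2 * (K * n * e) \<le> d' / 2" using e0 by linarith
    have t2: "2 * ((1 + K) * \<epsilon>) = d' / 4" unfolding \<epsilon>_def using K1 by (simp add: field_simps)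
    have "d' \<le> 2 * (K * n * e) + 2 * ((1 + K) * \<epsilon>)" unfolding d'_def by (rule key[OF e0 eps0])
    with t1 t2 d'0 show False by simp
  qed
  then show ?thesis unfolding F_def by (simp only: integral_complex_of_real of_real_eq_iff)
qed

lemma approx_open_indicator:
  fixes U :: "real set"
  assumes U: "open U"
  shows "\<exists>\<phi>::nat \<Rightarrow> real \<Rightarrow> real. (\<forall>k. continuous_on UNIV (\<phi> k)) \<and> (\<forall>k y. 0 \<le> \<phi> k y \<and> \<phi> k y \<le> 1)
           \<and> (\<forall>y. (\<lambda>k. \<phi> k y) \<longlonglongrightarrow> indicator U y)"
proof (cases "U = UNIV")
  case True
  then show ?thesis by (intro exI[of _ "\<lambda>k y. 1"]) (auto intro: continuous_intros)
next
  case False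
  define \<phi> where "\<phi> k y = min 1 (real k * infdist y (- U))" for k y
  have c: "continuous_on UNIV (\<phi> k)" for k
    unfolding \<phi>_def by (intro continuous_intros)
  have b: "0 \<le> \<phi> k y \<and> \<phi> k y \<le> 1" for k y
    unfolding \<phi>_def by (auto simp: infdist_nonneg)
  have l: "(\<lambda>k. \<phi> k y) \<longlonglongrightarrow> indicator U y" for y
  proof (cases "y \<in> U")
    case True
    have d: "infdist y (- U) > 0"
      using False True U by (intro infdist_pos_not_in_closed) auto
    have "eventually (\<lambda>k. \<phi> k y = 1) sequentially"
    proof (rule eventually_sequentiallyI[of "nat \<lceil>1 / infdist y (- U)\<rceil>"])
      fix k assume "nat \<lceil>1 / infdist y (- U)\<rceil> \<le> k"
      then have "1 / infdist y (- U) \<le> real k" by linarith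
      then have "1 \<le> real k * infdist y (- U)" using d by (simp add: field_simps)
      then show "\<phi> k y = 1" unfolding \<phi>_def by simp
    qed
    then show ?thesis using True by (simp add: tendsto_eventually)
  next
    case False
    then have "\<phi> k y = 0" for k unfolding \<phi>_def by (simp add: infdist_zero)
    then show ?thesis using False by simp
  qed
  show ?thesis using c b l by blast
qed

lemma char_unique:
  fixes \<mu> \<nu> :: "('a::finite \<Rightarrow> real) measure"
  assumes P: "prob_space \<mu>" "prob_space \<nu>"
    and S: "sets \<mu> = sets (Pi\<^sub>M UNIV (\<lambda>_. borel))" "sets \<nu> = sets (Pi\<^sub>M UNIV (\<lambda>_. borel))"
    and ch: "\<And>t. (\<integral>v. cis (\<Sum>x\<in>UNIV. t x * v x) \<partial>\<mu>) = (\<integral>v. cis (\<Sum>x\<in>UNIV. t x * v x) \<partial>\<nu>)"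
  shows "\<mu> = \<nu>"
proof -
  define E where "E = {Pi\<^sub>E UNIV X | X :: 'a \<Rightarrow> real set. \<forall>i. open (X i)}"
  have Eopen: "open e" if "e \<in> E" for e
    using that unfolding E_def by (auto intro!: open_PiE)
  have sigE: "sets (Pi\<^sub>M UNIV (\<lambda>_. borel :: real measure)) = sigma_sets UNIV E"
  proof -
    have "sets (Pi\<^sub>M UNIV (\<lambda>_. borel :: real measure)) = sets (borel :: ('a \<Rightarrow> real) measure)"
      by (rule sets_PiM_equal_borel)
    also have "\<dots> = sigma_sets UNIV E"
    proof
      obtain K :: "('a \<Rightarrow> real) set set" where K: "topological_basis K" "countable K"
        "\<And>k. k \<in> K \<Longrightarrow> \<exists>X. (k = Pi\<^sub>E UNIV X) \<and> (\<forall>i. open (X i)) \<and> finite {i. X i \<noteq> UNIV}"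
        using product_topology_countable_basis by fast
      have KE: "K \<subseteq> E" unfolding E_def using K(3) by blast
      have "U \<in> sigma_sets UNIV E" if "open U" for U :: "('a \<Rightarrow> real) set"
      proof -
        interpret SA: sigma_algebra UNIV "sigma_sets UNIV E"
          by (rule sigma_algebra_sigma_sets) simp
        obtain B where "B \<subseteq> K" "U = \<Union>B"
          using \<open>open U\<close> K(1) by (metis topological_basis_def)
        moreover have "countable B" using \<open>B \<subseteq> K\<close> K(2) countable_subset by blast
        ultimately show ?thesis using KE
          by (simp only:) (rule SA.countable_Union, auto intro: sigma_sets.Basic)
      qed
      then have "sigma_sets UNIV (Collect open) \<subseteq> sigma_sets UNIV E"
        by (intro sigma_algebra.sigma_sets_subset[OF sigma_algebra_sigma_sets]) auto
      then show "sets (borel :: ('a \<Rightarrow> real) measure) \<subseteq> sigma_sets UNIV E"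
        by (simp add: borel_def)
    next
      show "sigma_sets UNIV E \<subseteq> sets (borel :: ('a \<Rightarrow> real) measure)"
        using Eopen by (intro sets.sigma_sets_subset') (auto simp: space_borel)
    qed
    finally show ?thesis .
  qed
  show ?thesis
  proof (rule measure_eqI_generator_eq[where E=E and \<Omega>=UNIV and A="\<lambda>_. UNIV"])
    show "Int_stable E"
      unfolding E_def
    proof (safe intro!: Int_stableI)
      fix X Y :: "'a \<Rightarrow> real set" assume "\<forall>i. open (X i)" "\<forall>i. open (Y i)"
      then show "\<exists>Z. Pi\<^sub>E UNIV X \<inter> Pi\<^sub>E UNIV Y = Pi\<^sub>E UNIV Z \<and> (\<forall>i. open (Z i))"
        by (intro exI[of _ "\<lambda>i. X i \<inter> Y i"]) (auto simp: PiE_Int)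
    qed
    show "E \<subseteq> Pow UNIV" by simp
    show "sets \<mu> = sigma_sets UNIV E" using S(1) sigE by simp
    show "sets \<nu> = sigma_sets UNIV E" using S(2) sigE by simp
    show "range (\<lambda>_. UNIV) \<subseteq> E" unfolding E_def by (auto intro!: exI[of _ "\<lambda>_. UNIV"])
    show "(\<Union>i::nat. UNIV) = (UNIV :: ('a \<Rightarrow> real) set)" by simp
    show "emeasure \<mu> UNIV \<noteq> \<infinity>" for i :: nat
    proof -
      interpret prob_space \<mu> by (rule P(1))
      show ?thesis by simp
    qed
    fix A assume "A \<in> E"
    then obtain X where A: "A = Pi\<^sub>E UNIV X" and Xo: "\<And>i. open (X i)" unfolding E_def by auto
    have "\<forall>x. \<exists>\<phi>::nat \<Rightarrow> real \<Rightarrow> real. (\<forall>k. continuous_on UNIV (\<phi> k)) \<and> (\<forall>k y. 0 \<le> \<phi> k y \<and> \<phi> k y \<le> 1)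
           \<and> (\<forall>y. (\<lambda>k. \<phi> k y) \<longlonglongrightarrow> indicator (X x) y)"
      using approx_open_indicator[OF Xo] by blast
    from choice[OF this] obtain \<phi> :: "'a \<Rightarrow> nat \<Rightarrow> real \<Rightarrow> real" where \<phi>0: "\<forall>x. (\<forall>k. continuous_on UNIV (\<phi> x k)) \<and> (\<forall>k y. 0 \<le> \<phi> x k y \<and> \<phi> x k y \<le> 1)
           \<and> (\<forall>y. (\<lambda>k. \<phi> x k y) \<longlonglongrightarrow> indicator (X x) y)" by blast
    have \<phi>: "\<And>x k. continuous_on UNIV (\<phi> x k)" "\<And>x k y. 0 \<le> \<phi> x k y" "\<And>x k y. \<phi> x k y \<le> 1"
      "\<And>x y. (\<lambda>k. \<phi> x k y) \<longlonglongrightarrow> indicator (X x) y"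
      using \<phi>0 by auto
    have phim[measurable]: "\<phi> x k \<in> borel_measurable borel" for x k
      using \<phi>(1) by (intro borel_measurable_continuous_onI) auto
    have Am: "A \<in> sets (Pi\<^sub>M UNIV (\<lambda>_. borel))"
      using sigE \<open>A \<in> E\<close> by auto
    have ind: "(\<Prod>x\<in>UNIV. indicator (X x) (v x)) = (indicator A v :: real)" for v
    proof (cases "v \<in> A")
      case True
      then have "indicator (X x) (v x) = (1::real)" for x unfolding A by (simp add: PiE_iff)
      then show ?thesis using True by simp
    next
      case False
      then obtain x where "v x \<notin> X x" unfolding A by (auto simp: PiE_iff)
      then have "(\<Prod>x\<in>UNIV. indicator (X x) (v x)) = (0::real)"
        by (intro prod_zero) (auto intro!: exI[of _ x])
      then show ?thesis using False by simp
    qed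
    have lim: "(\<lambda>k. \<integral>v. (\<Prod>x\<in>UNIV. \<phi> x k (v x)) \<partial>M) \<longlonglongrightarrow> measure M A"
      if PM: "prob_space M" and SM: "sets M = sets (Pi\<^sub>M UNIV (\<lambda>_. borel))" for M
    proof -
      interpret prob_space M by (rule PM)
      have mc: "f \<in> borel_measurable M" if "f \<in> borel_measurable (Pi\<^sub>M UNIV (\<lambda>_. borel))" for f :: "_ \<Rightarrow> real"
        using that measurable_cong_sets[OF SM refl] by auto
      have "(\<lambda>k. \<integral>v. (\<Prod>x\<in>UNIV. \<phi> x k (v x)) \<partial>M) \<longlonglongrightarrow> (\<integral>v. indicator A v \<partial>M)"
      proof (rule integral_dominated_convergence[where w="\<lambda>_. 1"])
        show "indicator A \<in> borel_measurable M" using Am SM by (intro borel_measurable_indicator) simp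
        show "(\<lambda>v. \<Prod>x\<in>UNIV. \<phi> x k (v x)) \<in> borel_measurable M" for k by (intro mc) measurable
        show "integrable M (\<lambda>_. 1::real)" by simp
        show "AE v in M. (\<lambda>k. \<Prod>x\<in>UNIV. \<phi> x k (v x)) \<longlonglongrightarrow> indicator A v"
          unfolding ind[symmetric] by (intro AE_I2 tendsto_prod \<phi>(4))
        show "AE v in M. norm (\<Prod>x\<in>UNIV. \<phi> x k (v x)) \<le> 1" for k
        proof (rule AE_I2)
          fix v
          have "0 \<le> (\<Prod>x\<in>UNIV. \<phi> x k (v x))" "(\<Prod>x\<in>UNIV. \<phi> x k (v x)) \<le> 1"
            using \<phi>(2,3) by (auto intro!: prod_le_1 prod_nonneg)
          then show "norm (\<Prod>x\<in>UNIV. \<phi> x k (v x)) \<le> 1" by simp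
        qed
      qed
      also have "(\<integral>v. indicator A v \<partial>M) = measure M A"
        using Am SM by (simp add: sets.Int_space_eq2)
      finally show ?thesis .
    qed
    have eqk: "(\<integral>v. (\<Prod>x\<in>UNIV. \<phi> x k (v x)) \<partial>\<mu>) = (\<integral>v. (\<Prod>x\<in>UNIV. \<phi> x k (v x)) \<partial>\<nu>)" for k
      by (rule prod_test_eq[OF P S ch \<phi>(1) \<phi>(2) \<phi>(3)])
    have "measure \<mu> A = measure \<nu> A"
      using lim[OF P(1) S(1)] lim[OF P(2) S(2)] unfolding eqk by (rule LIMSEQ_unique)
    then show "emeasure \<mu> A = emeasure \<nu> A"
      using P by (simp add: finite_measure.emeasure_eq_measure prob_space_def)
  qed
qed

lemma laplacian_alt: "laplacian E f x = (\<Sum>y\<in>UNIV. if E x y then f y - f x else 0)"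
proof -
  have "{y. E x y} = {y\<in>UNIV. E x y}" by simp
  then show ?thesis unfolding laplacian_def by (simp only: sum.inter_filter[OF finite])
qed

lemma nonpos_sum_zero: "finite A \<Longrightarrow> (\<And>x. x \<in> A \<Longrightarrow> (f x::real) \<le> 0) \<Longrightarrow> sum f A = 0 \<Longrightarrow> x \<in> A \<Longrightarrow> f x = 0"
  using sum_nonneg_eq_0_iff[of A "\<lambda>x. - f x"] by (auto simp: sum_negf)

lemma laplacian_sum_zero:
  fixes E :: "'a::finite \<Rightarrow> 'a \<Rightarrow> bool"
  assumes g: "simple_graph E"
  shows "(\<Sum>x\<in>UNIV. laplacian E f x) = 0"
proof -
  have sym: "E x y = E y x" for x y using g unfolding simple_graph_def by blast
  have "(\<Sum>x\<in>UNIV. laplacian E f x) = (\<Sum>x\<in>UNIV. \<Sum>y\<in>UNIV. if E x y then f y - f x else 0)"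
    unfolding laplacian_alt ..
  also have "\<dots> = (\<Sum>x\<in>UNIV. \<Sum>y\<in>UNIV. if E x y then f y else 0) - (\<Sum>x\<in>UNIV. \<Sum>y\<in>UNIV. if E x y then f x else 0)"
  proof -
    have "(\<Sum>y\<in>UNIV. if E x y then f y - f x else 0) = (\<Sum>y\<in>UNIV. if E x y then f y else 0) - (\<Sum>y\<in>UNIV. if E x y then f x else 0)" for x
      by (subst sum_subtractf[symmetric]) (rule sum.cong, auto)
    then show ?thesis by (simp add: sum_subtractf)
  qed
  also have "(\<Sum>x\<in>UNIV. \<Sum>y\<in>UNIV. if E x y then f y else 0) = (\<Sum>y\<in>UNIV. \<Sum>x\<in>UNIV. if E x y then f y else 0)"
    by (rule sum.swap)
  also have "\<dots> = (\<Sum>x\<in>UNIV. \<Sum>y\<in>UNIV. if E x y then f x else 0)"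
    by (intro sum.cong refl) (auto simp: sym)
  finally show ?thesis by simp
qed

lemma laplacian_const_shift: "laplacian E (\<lambda>x. f x - c) x = laplacian E f x"
  unfolding laplacian_def by simp

lemma harmonic_const:
  fixes E :: "'a::finite \<Rightarrow> 'a \<Rightarrow> bool"
  assumes g: "simple_graph E" and conn: "connected_graph E"
    and h: "\<And>x. laplacian E h x \<le> 0"
  shows "h y = h x"
proof -
  have all0: "laplacian E h x = 0" for x
  proof -
    have "(\<Sum>x\<in>UNIV. laplacian E h x) = 0" by (rule laplacian_sum_zero[OF g])
    then show ?thesis using h by (intro nonpos_sum_zero[of UNIV "laplacian E h"]) auto
  qed
  define m where "m = Max (range h)"
  have "m \<in> range h" unfolding m_def by (intro Max_in) auto
  then obtain x0 where hx0: "h x0 = m" by auto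
  have x0: "h x \<le> h x0" for x unfolding hx0 m_def by (intro Max_ge) auto
  have stepl: "h v = h x0" if "h u = h x0" "E u v" for u v
  proof -
    have le: "\<forall>w\<in>{w. E u w}. h w - h u \<le> 0" using x0 that(1) by auto
    have "(\<Sum>w\<in>{w. E u w}. h w - h u) = 0" using all0[of u] unfolding laplacian_def .
    then have "h v - h u = 0"
      using le that(2) by (intro nonpos_sum_zero[of "{w. E u w}" "\<lambda>w. h w - h u"]) auto
    then show ?thesis using that by auto
  qed
  have reach: "h v = h x0" if "E\<^sup>*\<^sup>* x0 v" for v
    using that
  proof (induction rule: rtranclp_induct)
    case base
    then show ?case by simp
  next
    case (step u v)
    then show ?case using stepl by blast
  qed
  have "h y = h x0" "h x = h x0"
    using reach conn unfolding connected_graph_def by auto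
  then show ?thesis by simp
qed

lemma odometer_char:
  fixes E :: "'a::finite \<Rightarrow> 'a \<Rightarrow> bool" and s w :: "'a \<Rightarrow> real"
  assumes g: "simple_graph E" and conn: "connected_graph E"
    and w: "\<And>x. s x + laplacian E w x = 1"
  shows "stabilizes E s" and "odometer E s = (\<lambda>x. w x - Min (range w))"
proof -
  define m where "m = Min (range w)"
  define u0 where "u0 x = w x - m" for x
  have "m \<in> range w" unfolding m_def by (intro Min_in) auto
  then obtain x1 where x1: "w x1 = m" by auto
  have u0pos: "0 \<le> u0 x" for x unfolding u0_def m_def by (simp add: Min_le)
  have lapu0: "laplacian E u0 x = laplacian E w x" for x
    unfolding u0_def by (rule laplacian_const_shift)
  have u0in: "u0 \<in> stab_set E s"
    unfolding stab_set_def using u0pos w lapu0 by simp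
  then show "stabilizes E s" unfolding stabilizes_def by auto
  have ge: "u0 x \<le> f x" if f: "f \<in> stab_set E s" for f x
  proof -
    define h where "h x = f x - u0 x" for x
    have fpos: "\<And>x. 0 \<le> f x" and fs: "\<And>x. s x + laplacian E f x \<le> 1"
      using f unfolding stab_set_def by auto
    have lh: "laplacian E h x = laplacian E f x - laplacian E u0 x" for x
      unfolding laplacian_def h_def by (simp add: sum_subtractf[symmetric] algebra_simps)
    have "laplacian E h x \<le> 0" for x
      using fs[of x] w[of x] lapu0[of x] lh[of x] by linarith
    then have "h x = h x1" by (rule harmonic_const[OF g conn])
    moreover have "u0 x1 = 0" unfolding u0_def using x1 by simp
    ultimately show ?thesis using fpos[of x1] unfolding h_def by linarith
  qed
  show "odometer E s = (\<lambda>x. w x - Min (range w))"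
  proof
    fix x
    have "odometer E s x = u0 x"
      unfolding odometer_def
      by (rule cInf_eq_minimum) (use u0in ge in auto)
    then show "odometer E s x = w x - Min (range w)" unfolding u0_def m_def .
  qed
qed

lemma srw_P_nonneg: "0 \<le> srw_P E w y"
  by (simp add: srw_P_def)

lemma srw_P_sum_le: "(\<Sum>y\<in>UNIV. srw_P E w y) \<le> 1"
proof -
  have "(\<Sum>y\<in>UNIV. srw_P E w y) = (\<Sum>y\<in>{y\<in>UNIV. E w y}. 1 / real (deg E w))"
    unfolding srw_P_def by (simp only: sum.inter_filter[OF finite])
  also have "\<dots> = real (deg E w) * (1 / real (deg E w))"
    by (simp add: deg_def)
  also have "\<dots> \<le> 1" by (cases "deg E w = 0") auto
  finally show ?thesis .
qed

lemma kw_nonneg: "0 \<le> killed_walk E z n x y"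
  by (induction n arbitrary: y) (auto intro!: sum_nonneg mult_nonneg_nonneg srw_P_nonneg)

lemma kw_at: "killed_walk E z n x z = 0"
  by (cases n) auto

lemma kw_from: "killed_walk E z n z y = 0"
  by (induction n arbitrary: y) auto

lemma kw_one: "killed_walk E z (Suc 0) x w = (if w = z \<or> x = z then 0 else srw_P E x w)"
proof -
  have "(\<Sum>u\<in>UNIV. killed_walk E z 0 x u * srw_P E u w) = (\<Sum>u\<in>UNIV. if u = x then (if x = z then 0 else srw_P E x w) else 0)"
    by (intro sum.cong) auto
  also have "\<dots> = (if x = z then 0 else srw_P E x w)" by simp
  finally have eq: "(\<Sum>u\<in>UNIV. killed_walk E z 0 x u * srw_P E u w) = (if x = z then 0 else srw_P E x w)" .
  show ?thesis by (simp only: killed_walk.simps(2) eq) auto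
qed

lemma kw_CK: "killed_walk E z (m + n) x y = (\<Sum>w\<in>UNIV. killed_walk E z m x w * killed_walk E z n w y)"
proof (induction n arbitrary: y)
  case 0
  have "(\<Sum>w\<in>UNIV. killed_walk E z m x w * killed_walk E z 0 w y) = (\<Sum>w\<in>UNIV. if w = y then killed_walk E z m x y else 0)"
    by (intro sum.cong) (auto simp: kw_at)
  then show ?case by simp
next
  case (Suc n)
  show ?case
  proof (cases "y = z")
    case True
    then show ?thesis by simp
  next
    case False
    have "killed_walk E z (m + Suc n) x y = (\<Sum>u\<in>UNIV. killed_walk E z (m + n) x u * srw_P E u y)"
      using False by simp
    also have "\<dots> = (\<Sum>u\<in>UNIV. \<Sum>w\<in>UNIV. killed_walk E z m x w * killed_walk E z n w u * srw_P E u y)"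
      by (simp add: Suc.IH sum_distrib_right)
    also have "\<dots> = (\<Sum>w\<in>UNIV. \<Sum>u\<in>UNIV. killed_walk E z m x w * killed_walk E z n w u * srw_P E u y)"
      by (rule sum.swap)
    also have "\<dots> = (\<Sum>w\<in>UNIV. killed_walk E z m x w * killed_walk E z (Suc n) w y)"
      using False by (simp add: sum_distrib_left mult.assoc)
    finally show ?thesis .
  qed
qed

definition mass :: "('a::finite \<Rightarrow> 'a \<Rightarrow> bool) \<Rightarrow> 'a \<Rightarrow> nat \<Rightarrow> 'a \<Rightarrow> real" where
  "mass E z n x = (\<Sum>y\<in>UNIV. killed_walk E z n x y)"

lemma mass_nonneg: "0 \<le> mass E z n x"
  unfolding mass_def by (intro sum_nonneg kw_nonneg)

lemma kw_le_mass: "killed_walk E z n x y \<le> mass E z n x"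
  unfolding mass_def by (rule member_le_sum) (auto intro: kw_nonneg)

lemma mass_Suc_le: "mass E z (Suc n) x \<le> mass E z n x"
proof -
  have "mass E z (Suc n) x \<le> (\<Sum>y\<in>UNIV. \<Sum>u\<in>UNIV. killed_walk E z n x u * srw_P E u y)"
    unfolding mass_def by (intro sum_mono) (auto intro!: sum_nonneg mult_nonneg_nonneg kw_nonneg srw_P_nonneg)
  also have "\<dots> = (\<Sum>u\<in>UNIV. killed_walk E z n x u * (\<Sum>y\<in>UNIV. srw_P E u y))"
    by (subst sum.swap) (simp add: sum_distrib_left)
  also have "\<dots> \<le> (\<Sum>u\<in>UNIV. killed_walk E z n x u * 1)"
    by (intro sum_mono mult_left_mono srw_P_sum_le kw_nonneg)
  finally show ?thesis by (simp add: mass_def)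
qed

lemma mass_antimono: "m \<le> n \<Longrightarrow> mass E z n x \<le> mass E z m x"
proof (induction n)
  case 0
  then show ?case by simp
next
  case (Suc n)
  then show ?case
    by (cases "m = Suc n") (auto intro: order.trans[OF mass_Suc_le])
qed

lemma mass_le1: "mass E z n x \<le> 1"
proof -
  have "mass E z n x \<le> mass E z 0 x" by (rule mass_antimono) simp
  also have "\<dots> \<le> 1"
  proof -
    have "mass E z 0 x = (\<Sum>y\<in>UNIV. if y = x then (if x = z then 0 else 1) else 0)"
      unfolding mass_def by (intro sum.cong) auto
    then show ?thesis by simp
  qed
  finally show ?thesis .
qed

lemma mass_shift: "mass E z (n + J) x = (\<Sum>w\<in>UNIV. killed_walk E z n x w * mass E z J w)"
  unfolding mass_def kw_CK by (subst sum.swap) (simp add: sum_distrib_left)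

lemma mass_from: "mass E z n z = 0"
  unfolding mass_def by (simp add: kw_from)

lemma deg_le_card: "deg E x \<le> CARD('a::finite)"
  for E :: "'a::finite \<Rightarrow> 'a \<Rightarrow> bool"
  unfolding deg_def by (rule card_mono) auto

lemma mass_reach:
  fixes E :: "'a::finite \<Rightarrow> 'a \<Rightarrow> bool"
  assumes "E\<^sup>*\<^sup>* x z"
  shows "\<exists>j. mass E z j x \<le> 1 - (1 / real CARD('a)) ^ j"
  using assms
proof (induction rule: converse_rtranclp_induct)
  case base
  show ?case by (intro exI[of _ 0]) (simp add: mass_from)
next
  case (step x v)
  define c where "c = 1 / real CARD('a)"
  have c0: "0 < c" "c \<le> 1" unfolding c_def by auto
  from step.IH obtain j where j: "mass E z j v \<le> 1 - c ^ j" unfolding c_def by auto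
  show ?case
  proof (cases "x = z")
    case True
    then show ?thesis using c0 by (intro exI[of _ 0]) (simp add: mass_from)
  next
    case False
    have degpos: "deg E x > 0"
    proof -
      have "v \<in> {y. E x y}" using step.hyps(1) by simp
      then show ?thesis unfolding deg_def by (metis card_gt_0_iff empty_iff finite)
    qed
    have Pv: "c \<le> srw_P E x v"
      unfolding srw_P_def c_def using step.hyps(1) degpos deg_le_card[of E x]
      by (simp add: frac_le)
    have "mass E z (Suc j) x = (\<Sum>w\<in>UNIV. killed_walk E z (Suc 0) x w * mass E z j w)"
      using mass_shift[of E z "Suc 0" j x] by simp
    also have "\<dots> \<le> (\<Sum>w\<in>UNIV. srw_P E x w * mass E z j w)"
      using False by (intro sum_mono) (simp only: kw_one, auto intro!: mult_nonneg_nonneg srw_P_nonneg mass_nonneg)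
    also have "\<dots> = srw_P E x v * mass E z j v + (\<Sum>w\<in>UNIV - {v}. srw_P E x w * mass E z j w)"
      by (subst sum.remove[of UNIV v]) auto
    also have "\<dots> \<le> srw_P E x v * (1 - c ^ j) + (\<Sum>w\<in>UNIV - {v}. srw_P E x w)"
      by (intro add_mono mult_left_mono j srw_P_nonneg sum_mono)
         (auto intro: mult_left_le[OF mass_le1 srw_P_nonneg])
    also have "\<dots> = srw_P E x v * (1 - c ^ j) + ((\<Sum>w\<in>UNIV. srw_P E x w) - srw_P E x v)"
      by (subst sum.remove[of UNIV v]) auto
    also have "\<dots> \<le> srw_P E x v * (1 - c ^ j) + (1 - srw_P E x v)"
      using srw_P_sum_le[of E x] by simp
    also have "\<dots> = 1 - srw_P E x v * c ^ j" by (simp add: algebra_simps)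
    also have "\<dots> \<le> 1 - c * c ^ j"
      using Pv c0 by (simp add: mult_right_mono)
    finally show ?thesis unfolding c_def by (intro exI[of _ "Suc j"]) simp
  qed
qed

lemma mass_uniform:
  fixes E :: "'a::finite \<Rightarrow> 'a \<Rightarrow> bool"
  assumes conn: "connected_graph E"
  shows "\<exists>J q. 0 < J \<and> 0 \<le> q \<and> q < 1 \<and> (\<forall>x. mass E z J x \<le> q)"
proof -
  define c where "c = 1 / real CARD('a)"
  have c0: "0 < c" "c \<le> 1" unfolding c_def by auto
  have "\<forall>x. \<exists>j. mass E z j x \<le> 1 - c ^ j"
    using mass_reach conn unfolding connected_graph_def c_def by blast
  from choice[OF this] obtain jx where jx: "\<And>x. mass E z (jx x) x \<le> 1 - c ^ (jx x)" by blast
  define J where "J = Suc (Max (range jx))"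
  have jxJ: "jx x \<le> J" for x
  proof -
    have "jx x \<le> Max (range jx)" by (rule Max_ge) auto
    then show ?thesis unfolding J_def by (rule le_SucI)
  qed
  have "mass E z J x \<le> 1 - c ^ J" for x
  proof -
    have "mass E z J x \<le> mass E z (jx x) x" by (rule mass_antimono[OF jxJ])
    also have "\<dots> \<le> 1 - c ^ (jx x)" by (rule jx)
    also have "\<dots> \<le> 1 - c ^ J" using c0 jxJ[of x] by (simp add: power_decreasing)
    finally show ?thesis .
  qed
  moreover have "0 < c ^ J" "c ^ J \<le> 1" using c0 by (auto simp: power_le_one)
  ultimately show ?thesis by (intro exI[of _ J] exI[of _ "1 - c ^ J"]) (auto simp: J_def)
qed

lemma mass_geom:
  fixes E :: "'a::finite \<Rightarrow> 'a \<Rightarrow> bool"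
  assumes conn: "connected_graph E"
  shows "\<exists>r C. 0 < r \<and> r < 1 \<and> (\<forall>n x. mass E z n x \<le> C * r ^ n)"
proof -
  obtain J q where Jq: "0 < J" "0 \<le> q" "q < 1" "\<And>x. mass E z J x \<le> q"
    using mass_uniform[OF conn, of z] by blast
  define q' where "q' = max q (1/2)"
  have q': "0 < q'" "q' < 1" "q \<le> q'" unfolding q'_def using Jq by auto
  define r where "r = root J q'"
  have r: "0 < r" "r < 1" "r ^ J = q'" unfolding r_def using Jq q' by (auto simp: real_root_gt_zero)
  have dec: "mass E z (n + J) x \<le> q' * mass E z n x" for n x
  proof -
    have "mass E z (n + J) x = (\<Sum>w\<in>UNIV. killed_walk E z n x w * mass E z J w)" by (rule mass_shift)
    also have "\<dots> \<le> (\<Sum>w\<in>UNIV. killed_walk E z n x w * q')"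
      using Jq(4) q' by (intro sum_mono mult_left_mono kw_nonneg) (auto intro: order.trans)
    also have "\<dots> = q' * mass E z n x" by (simp add: mass_def sum_distrib_left mult.commute)
    finally show ?thesis .
  qed
  have main: "mass E z n x \<le> (1 / q') * r ^ n" for n x
  proof (induction n arbitrary: x rule: less_induct)
    case (less n)
    show ?case
    proof (cases "n < J")
      case True
      have "q' = r ^ J" using r by simp
      also have "\<dots> \<le> r ^ n" using r True by (intro power_decreasing) auto
      finally have "1 \<le> (1 / q') * r ^ n" using q' by (simp add: field_simps)
      then show ?thesis using mass_le1[of E z n x] by linarith
    next
      case False
      then obtain m where n: "n = m + J" by (metis add.commute le_add_diff_inverse not_less)
      have "m < n" using n Jq by simp
      have "mass E z n x \<le> q' * mass E z m x" unfolding n by (rule dec)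
      also have "\<dots> \<le> q' * ((1 / q') * r ^ m)" using less.IH[OF \<open>m < n\<close>] q' by (intro mult_left_mono) auto
      also have "\<dots> = r ^ m" using q' by simp
      also have "\<dots> = (1 / q') * r ^ n" unfolding n using r q' by (simp add: power_add)
      finally show ?thesis .
    qed
  qed
  show ?thesis using r main by blast
qed

lemma kw_summable:
  fixes E :: "'a::finite \<Rightarrow> 'a \<Rightarrow> bool"
  assumes conn: "connected_graph E"
  shows "summable (\<lambda>n. killed_walk E z n x y)"
proof -
  obtain r C where rC: "0 < r" "r < 1" "\<And>n x. mass E z n x \<le> C * r ^ n"
    using mass_geom[OF conn, of z] by blast
  show ?thesis
  proof (rule summable_comparison_test')
    show "summable (\<lambda>n. C * r ^ n)" using rC by (intro summable_mult summable_geometric) auto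
    show "norm (killed_walk E z n x y) \<le> C * r ^ n" for n
      using kw_nonneg[of E z n x y] kw_le_mass[of E z n x y] rC(3)[of n x] by simp
  qed
qed

lemma green_z_rec:
  fixes E :: "'a::finite \<Rightarrow> 'a \<Rightarrow> bool"
  assumes conn: "connected_graph E"
  shows "green_z E w z y = (if z = y \<and> y \<noteq> w then 1 else 0)
           + (if y = w then 0 else (\<Sum>v\<in>UNIV. green_z E w z v * srw_P E v y))"
proof -
  have S: "summable (\<lambda>n. killed_walk E w n z v)" for v by (rule kw_summable[OF conn])
  have "green_z E w z y = killed_walk E w 0 z y + (\<Sum>n. killed_walk E w (Suc n) z y)"
    unfolding green_z_def using suminf_split_head[OF S[of y]] by simp
  also have "(\<Sum>n. killed_walk E w (Suc n) z y) = (if y = w then 0 else (\<Sum>v\<in>UNIV. green_z E w z v * srw_P E v y))"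
  proof (cases "y = w")
    case True
    then show ?thesis by simp
  next
    case False
    have "(\<Sum>n. killed_walk E w (Suc n) z y) = (\<Sum>n. \<Sum>v\<in>UNIV. killed_walk E w n z v * srw_P E v y)"
      using False by simp
    also have "\<dots> = (\<Sum>v\<in>UNIV. \<Sum>n. killed_walk E w n z v * srw_P E v y)"
      by (rule suminf_sum) (intro summable_mult2 S)
    also have "\<dots> = (\<Sum>v\<in>UNIV. green_z E w z v * srw_P E v y)"
      unfolding green_z_def by (intro sum.cong refl suminf_mult2[symmetric] S)
    finally show ?thesis using False by simp
  qed
  finally show ?thesis by simp
qed

lemma deg0_single:
  fixes E :: "'a::finite \<Rightarrow> 'a \<Rightarrow> bool"
  assumes conn: "connected_graph E" and d: "deg E y = 0"
  shows "x = y"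
proof (rule ccontr)
  assume "x \<noteq> y"
  have "E\<^sup>*\<^sup>* y x" using conn unfolding connected_graph_def by auto
  then obtain v where "E y v" using \<open>x \<noteq> y\<close> by (metis converse_rtranclpE)
  then have "{v. E y v} \<noteq> {}" by auto
  then show False using d unfolding deg_def by simp
qed

lemma green_z_lap:
  fixes E :: "'a::finite \<Rightarrow> 'a \<Rightarrow> bool"
  assumes g: "simple_graph E" and conn: "connected_graph E"
  shows "laplacian E (\<lambda>y. green_z E w z y / real (deg E y)) y
           = (if y = w then 1 else 0) - (if y = z then 1 else 0)"
proof -
  define k where "k y = green_z E w z y / real (deg E y)" for y
  have sym: "E x y = E y x" for x y using g unfolding simple_graph_def by blast
  have off: "laplacian E k y = - (if y = z then 1 else 0)" if yw: "y \<noteq> w" for y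
  proof (cases "deg E y = 0")
    case True
    then have "w = y" by (rule deg0_single[OF conn])
    then show ?thesis using yw by simp
  next
    case False
    have "(\<Sum>v\<in>UNIV. green_z E w z v * srw_P E v y) = (\<Sum>v\<in>UNIV. if E y v then k v else 0)"
      unfolding k_def srw_P_def by (intro sum.cong refl) (auto simp: sym)
    also have "\<dots> = (\<Sum>v\<in>{v. E y v}. k v)"
    proof -
      have "{v. E y v} = {v \<in> UNIV. E y v}" by simp
      then show ?thesis by (simp only: sum.inter_filter[OF finite])
    qed
    finally have rec: "green_z E w z y = (if z = y then 1 else 0) + (\<Sum>v\<in>{v. E y v}. k v)"
      using green_z_rec[OF conn, of w z y] yw by simp
    have "laplacian E k y = (\<Sum>v\<in>{v. E y v}. k v) - real (deg E y) * k y"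
      unfolding laplacian_def by (simp add: sum_subtractf deg_def)
    also have "real (deg E y) * k y = green_z E w z y" unfolding k_def using False by simp
    finally show ?thesis using rec by auto
  qed
  have "laplacian E k y = (if y = w then 1 else 0) - (if y = z then 1 else 0)"
  proof (cases "y = w")
    case False
    then show ?thesis using off by simp
  next
    case True
    have "0 = (\<Sum>x\<in>UNIV. laplacian E k x)" by (rule laplacian_sum_zero[OF g, symmetric])
    also have "\<dots> = laplacian E k w + (\<Sum>x\<in>UNIV - {w}. laplacian E k x)"
      by (subst sum.remove[of UNIV w]) auto
    also have "(\<Sum>x\<in>UNIV - {w}. laplacian E k x) = (\<Sum>x\<in>UNIV - {w}. - (if x = z then 1 else 0))"
      by (intro sum.cong refl off) auto
    also have "\<dots> = - (if z = w then 0 else 1)"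
      by (simp add: sum_negf)
    finally show ?thesis using True by auto
  qed
  then show ?thesis unfolding k_def .
qed

lemma laplacian_lin:
  "laplacian E (\<lambda>x. \<Sum>i\<in>I. c i * f i x) y = (\<Sum>i\<in>I. c i * laplacian E (f i) y)"
  unfolding laplacian_def
  by (simp add: sum_subtractf[symmetric] right_diff_distrib[symmetric] sum_distrib_left)
     (subst sum.swap, simp)

lemma vec_meas:
  fixes \<eta> :: "'a::finite \<Rightarrow> 'b \<Rightarrow> real"
  assumes "\<And>x. \<eta> x \<in> borel_measurable N"
  shows "(\<lambda>\<omega> x. \<eta> x \<omega>) \<in> measurable N (Pi\<^sub>M UNIV (\<lambda>_. borel))"
  by (rule measurable_PiM_single') (use assms in auto)

lemma F_meas:
  "(\<lambda>v::'a::finite \<Rightarrow> real. \<lambda>x. v x - Min (range v)) \<in> measurable (Pi\<^sub>M UNIV (\<lambda>_. borel)) (Pi\<^sub>M UNIV (\<lambda>_. borel))"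
proof (rule measurable_PiM_single')
  fix x :: 'a
  show "(\<lambda>v::'a \<Rightarrow> real. v x - Min (range v)) \<in> borel_measurable (Pi\<^sub>M UNIV (\<lambda>_. borel))"
    by measurable
qed auto

lemma gauss_law_unique:
  fixes N1 :: "'b measure" and N2 :: "'c measure" and \<eta>1 :: "'a::finite \<Rightarrow> 'b \<Rightarrow> real" and \<eta>2 :: "'a \<Rightarrow> 'c \<Rightarrow> real"
  assumes G1: "centered_gaussian_vector N1 \<eta>1 C" and G2: "centered_gaussian_vector N2 \<eta>2 C"
  shows "distr N1 (Pi\<^sub>M UNIV (\<lambda>_. borel)) (\<lambda>\<omega> x. \<eta>1 x \<omega>) = distr N2 (Pi\<^sub>M UNIV (\<lambda>_. borel)) (\<lambda>\<omega> x. \<eta>2 x \<omega>)"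
proof (rule char_unique)
  have P1: "prob_space N1" and m1: "\<And>x. \<eta>1 x \<in> borel_measurable N1"
    and c1: "\<And>t. (\<integral>\<omega>. cis (\<Sum>x\<in>UNIV. t x * \<eta>1 x \<omega>) \<partial>N1) = complex_of_real (exp (- (\<Sum>x\<in>UNIV. \<Sum>y\<in>UNIV. t x * t y * C x y) / 2))"
    using G1 unfolding centered_gaussian_vector_def by auto
  have P2: "prob_space N2" and m2: "\<And>x. \<eta>2 x \<in> borel_measurable N2"
    and c2: "\<And>t. (\<integral>\<omega>. cis (\<Sum>x\<in>UNIV. t x * \<eta>2 x \<omega>) \<partial>N2) = complex_of_real (exp (- (\<Sum>x\<in>UNIV. \<Sum>y\<in>UNIV. t x * t y * C x y) / 2))"
    using G2 unfolding centered_gaussian_vector_def by auto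
  have v1: "(\<lambda>\<omega> x. \<eta>1 x \<omega>) \<in> measurable N1 (Pi\<^sub>M UNIV (\<lambda>_. borel))" by (rule vec_meas[OF m1])
  have v2: "(\<lambda>\<omega> x. \<eta>2 x \<omega>) \<in> measurable N2 (Pi\<^sub>M UNIV (\<lambda>_. borel))" by (rule vec_meas[OF m2])
  show "prob_space (distr N1 (Pi\<^sub>M UNIV (\<lambda>_. borel)) (\<lambda>\<omega> x. \<eta>1 x \<omega>))"
    by (rule prob_space.prob_space_distr[OF P1 v1])
  show "prob_space (distr N2 (Pi\<^sub>M UNIV (\<lambda>_. borel)) (\<lambda>\<omega> x. \<eta>2 x \<omega>))"
    by (rule prob_space.prob_space_distr[OF P2 v2])
  show "sets (distr N1 (Pi\<^sub>M UNIV (\<lambda>_. borel)) (\<lambda>\<omega> x. \<eta>1 x \<omega>)) = sets (Pi\<^sub>M UNIV (\<lambda>_. borel))" by simp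
  show "sets (distr N2 (Pi\<^sub>M UNIV (\<lambda>_. borel)) (\<lambda>\<omega> x. \<eta>2 x \<omega>)) = sets (Pi\<^sub>M UNIV (\<lambda>_. borel))" by simp
  fix t :: "'a \<Rightarrow> real"
  have cm: "(\<lambda>v. cis (\<Sum>x\<in>UNIV. t x * v x)) \<in> borel_measurable (Pi\<^sub>M UNIV (\<lambda>_. borel))" by measurable
  have "(\<integral>v. cis (\<Sum>x\<in>UNIV. t x * v x) \<partial>distr N1 (Pi\<^sub>M UNIV (\<lambda>_. borel)) (\<lambda>\<omega> x. \<eta>1 x \<omega>))
      = (\<integral>\<omega>. cis (\<Sum>x\<in>UNIV. t x * \<eta>1 x \<omega>) \<partial>N1)"
    by (rule integral_distr[OF v1 cm])
  also have "\<dots> = (\<integral>\<omega>. cis (\<Sum>x\<in>UNIV. t x * \<eta>2 x \<omega>) \<partial>N2)" using c1 c2 by simp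
  also have "\<dots> = (\<integral>v. cis (\<Sum>x\<in>UNIV. t x * v x) \<partial>distr N2 (Pi\<^sub>M UNIV (\<lambda>_. borel)) (\<lambda>\<omega> x. \<eta>2 x \<omega>))"
    by (rule integral_distr[OF v2 cm, symmetric])
  finally show "(\<integral>v. cis (\<Sum>x\<in>UNIV. t x * v x) \<partial>distr N1 (Pi\<^sub>M UNIV (\<lambda>_. borel)) (\<lambda>\<omega> x. \<eta>1 x \<omega>))
      = (\<integral>v. cis (\<Sum>x\<in>UNIV. t x * v x) \<partial>distr N2 (Pi\<^sub>M UNIV (\<lambda>_. borel)) (\<lambda>\<omega> x. \<eta>2 x \<omega>))" .
qed

theorem proposition1p3:
  fixes E :: "'a::finite \<Rightarrow> 'a \<Rightarrow> bool"
    and M :: "'b measure"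
    and \<sigma> :: "'a \<Rightarrow> 'b \<Rightarrow> real"
    and s :: "'b \<Rightarrow> 'a \<Rightarrow> real"
  assumes graph: "simple_graph E" and conn: "connected_graph E"
    and P: "prob_space M"
    and indep: "prob_space.indep_vars M (\<lambda>_. borel) \<sigma> UNIV"
    and normal: "\<And>x. distributed M lborel (\<sigma> x) std_normal_density"
    and s_def: "\<And>\<omega> x. s \<omega> x = 1 + \<sigma> x \<omega> - (1 / real CARD('a)) * (\<Sum>y\<in>UNIV. \<sigma> y \<omega>)"
  shows "(\<forall>\<omega>\<in>space M. stabilizes E (s \<omega>) \<and>
            (\<forall>x. s \<omega> x + laplacian E (odometer E (s \<omega>)) x = 1))
       \<and> (\<exists>(N :: 'b measure) \<eta>. centered_gaussian_vector N \<eta> (eta_cov E))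
       \<and> (\<forall>(N :: 'b measure) \<eta>. centered_gaussian_vector N \<eta> (eta_cov E) \<longrightarrow>
            distr M (Pi\<^sub>M UNIV (\<lambda>_. borel)) (\<lambda>\<omega>. odometer E (s \<omega>))
          = distr N (Pi\<^sub>M UNIV (\<lambda>_. borel)) (\<lambda>\<omega> x. \<eta> x \<omega> - Min (range (\<lambda>y. \<eta> y \<omega>))))"
proof -
  define n where "n = real CARD('a)"
  have n0: "0 < n" unfolding n_def by simp
  define cf where "cf x z = green E z x / real (deg E x)" for x z
  define \<eta>' where "\<eta>' x \<omega> = (\<Sum>z\<in>UNIV. cf x z * \<sigma> z \<omega>)" for x \<omega>
  have \<sigma>m[measurable]: "\<sigma> x \<in> borel_measurable M" for x
    using normal[of x] by (simp add: distributed_def)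
  have \<eta>'m[measurable]: "\<eta>' x \<in> borel_measurable M" for x
    unfolding \<eta>'_def by measurable
  have lapg: "laplacian E (\<lambda>x. cf x z) y = 1 / n - (if y = z then 1 else 0)" for z y
  proof -
    have "(\<lambda>x. cf x z) = (\<lambda>x. \<Sum>w\<in>UNIV. (1 / n) * (green_z E w z x / real (deg E x)))"
      unfolding cf_def green_def n_def by (simp add: sum_divide_distrib sum_distrib_left)
    then have "laplacian E (\<lambda>x. cf x z) y = (\<Sum>w\<in>UNIV. (1 / n) * ((if y = w then 1 else 0) - (if y = z then 1 else 0)))"
      by (simp only: laplacian_lin green_z_lap[OF graph conn])
    also have "\<dots> = (1 / n) * ((\<Sum>w\<in>UNIV. if y = w then 1 else 0) - (\<Sum>w\<in>(UNIV::'a set). if y = z then 1 else 0))"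
      by (simp only: sum_distrib_left[symmetric] sum_subtractf)
    also have "(\<Sum>w\<in>UNIV. if y = w then 1 else 0) = (1::real)" by simp
    also have "(\<Sum>w\<in>(UNIV::'a set). if y = z then 1 else 0) = n * (if y = z then 1 else 0)"
      by (simp add: n_def)
    also have "(1 / n) * (1 - n * (if y = z then 1 else 0)) = 1 / n - (if y = z then 1 else 0)"
      using n0 by (simp add: right_diff_distrib)
    finally show ?thesis .
  qed
  have lap\<eta>: "s \<omega> x + laplacian E (\<lambda>x. \<eta>' x \<omega>) x = 1" for \<omega> x
  proof -
    have "(\<lambda>x. \<eta>' x \<omega>) = (\<lambda>x. \<Sum>z\<in>UNIV. \<sigma> z \<omega> * cf x z)"
      unfolding \<eta>'_def by (simp add: mult.commute)
    then have "laplacian E (\<lambda>x. \<eta>' x \<omega>) x = (\<Sum>z\<in>UNIV. \<sigma> z \<omega> * (1 / n - (if x = z then 1 else 0)))"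
      by (simp only: laplacian_lin lapg)
    also have "\<dots> = (\<Sum>z\<in>UNIV. \<sigma> z \<omega> * (1 / n)) - (\<Sum>z\<in>UNIV. if x = z then \<sigma> z \<omega> else 0)"
    proof -
      have "(\<Sum>z\<in>UNIV. \<sigma> z \<omega> * (1 / n - (if x = z then 1 else 0)))
          = (\<Sum>z\<in>UNIV. \<sigma> z \<omega> * (1 / n) - (if x = z then \<sigma> z \<omega> else 0))"
        by (rule sum.cong) (auto simp: right_diff_distrib)
      then show ?thesis by (simp only: sum_subtractf)
    qed
    also have "\<dots> = (1 / n) * (\<Sum>z\<in>UNIV. \<sigma> z \<omega>) - \<sigma> x \<omega>"
      by (simp add: sum_distrib_left mult.commute)
    finally show ?thesis unfolding s_def n_def by simp
  qed
  have odo: "stabilizes E (s \<omega>)" "odometer E (s \<omega>) = (\<lambda>x. \<eta>' x \<omega> - Min (range (\<lambda>y. \<eta>' y \<omega>)))" for \<omega>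
    using odometer_char[OF graph conn lap\<eta>[of \<omega>]] by auto
  have part1: "\<forall>\<omega>\<in>space M. stabilizes E (s \<omega>) \<and> (\<forall>x. s \<omega> x + laplacian E (odometer E (s \<omega>)) x = 1)"
    using odo lap\<eta> by (simp add: laplacian_const_shift)
  have covform: "eta_cov E x y = (\<Sum>z\<in>UNIV. cf x z * cf y z)" for x y
    unfolding eta_cov_def cf_def by (simp add: sum_distrib_left field_simps)
  have gauss: "centered_gaussian_vector M \<eta>' (eta_cov E)"
    unfolding centered_gaussian_vector_def
  proof (intro conjI allI)
    show "prob_space M" by (rule P)
    show "\<eta>' x \<in> borel_measurable M" for x by measurable
    fix t :: "'a \<Rightarrow> real"
    define c where "c z = (\<Sum>x\<in>UNIV. t x * cf x z)" for z
    have lin: "(\<Sum>x\<in>UNIV. t x * \<eta>' x \<omega>) = (\<Sum>z\<in>UNIV. c z * \<sigma> z \<omega>)" for \<omega>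
      unfolding \<eta>'_def c_def by (simp add: sum_distrib_left sum_distrib_right mult.assoc) (rule sum.swap)
    have sq: "(\<Sum>z\<in>UNIV. (c z)^2) = (\<Sum>x\<in>UNIV. \<Sum>y\<in>UNIV. t x * t y * eta_cov E x y)"
    proof -
      have "(\<Sum>z\<in>UNIV. (c z)^2) = (\<Sum>z\<in>UNIV. \<Sum>x\<in>UNIV. \<Sum>y\<in>UNIV. t x * t y * (cf x z * cf y z))"
        unfolding c_def power2_eq_square sum_product by (intro sum.cong refl) (simp add: algebra_simps)
      also have "\<dots> = (\<Sum>x\<in>UNIV. \<Sum>z\<in>UNIV. \<Sum>y\<in>UNIV. t x * t y * (cf x z * cf y z))"
        by (rule sum.swap)
      also have "\<dots> = (\<Sum>x\<in>UNIV. \<Sum>y\<in>UNIV. \<Sum>z\<in>UNIV. t x * t y * (cf x z * cf y z))"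
        by (intro sum.cong refl sum.swap)
      also have "\<dots> = (\<Sum>x\<in>UNIV. \<Sum>y\<in>UNIV. t x * t y * eta_cov E x y)"
        unfolding covform by (simp add: sum_distrib_left)
      finally show ?thesis .
    qed
    show "(\<integral>\<omega>. cis (\<Sum>x\<in>UNIV. t x * \<eta>' x \<omega>) \<partial>M)
        = complex_of_real (exp (- (\<Sum>x\<in>UNIV. \<Sum>y\<in>UNIV. t x * t y * eta_cov E x y) / 2))"
      unfolding lin sq[symmetric] by (rule gauss_char_lincomb[OF P indep normal])
  qed
  have part3: "distr M (Pi\<^sub>M UNIV (\<lambda>_. borel)) (\<lambda>\<omega>. odometer E (s \<omega>))
          = distr N (Pi\<^sub>M UNIV (\<lambda>_. borel)) (\<lambda>\<omega> x. \<eta> x \<omega> - Min (range (\<lambda>y. \<eta> y \<omega>)))"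
    if G: "centered_gaussian_vector N \<eta> (eta_cov E)" for N :: "'b measure" and \<eta>
  proof -
    define F where "F v = (\<lambda>x. v x - Min (range v))" for v :: "'a \<Rightarrow> real"
    have Fm: "F \<in> measurable (Pi\<^sub>M UNIV (\<lambda>_. borel)) (Pi\<^sub>M UNIV (\<lambda>_. borel))"
      unfolding F_def by (rule F_meas)
    have m\<eta>: "\<eta> x \<in> borel_measurable N" for x using G unfolding centered_gaussian_vector_def by auto
    have "distr M (Pi\<^sub>M UNIV (\<lambda>_. borel)) (\<lambda>\<omega>. odometer E (s \<omega>))
        = distr M (Pi\<^sub>M UNIV (\<lambda>_. borel)) (\<lambda>\<omega>. F (\<lambda>x. \<eta>' x \<omega>))"
      by (intro distr_cong refl) (simp add: odo F_def)
    also have "\<dots> = distr (distr M (Pi\<^sub>M UNIV (\<lambda>_. borel)) (\<lambda>\<omega> x. \<eta>' x \<omega>)) (Pi\<^sub>M UNIV (\<lambda>_. borel)) F"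
      by (subst distr_distr[OF Fm vec_meas]) (auto simp: comp_def)
    also have "distr M (Pi\<^sub>M UNIV (\<lambda>_. borel)) (\<lambda>\<omega> x. \<eta>' x \<omega>) = distr N (Pi\<^sub>M UNIV (\<lambda>_. borel)) (\<lambda>\<omega> x. \<eta> x \<omega>)"
      by (rule gauss_law_unique[OF gauss G])
    also have "distr (distr N (Pi\<^sub>M UNIV (\<lambda>_. borel)) (\<lambda>\<omega> x. \<eta> x \<omega>)) (Pi\<^sub>M UNIV (\<lambda>_. borel)) F
        = distr N (Pi\<^sub>M UNIV (\<lambda>_. borel)) (\<lambda>\<omega>. F (\<lambda>x. \<eta> x \<omega>))"
      by (subst distr_distr[OF Fm vec_meas[OF m\<eta>]]) (auto simp: comp_def)
    also have "\<dots> = distr N (Pi\<^sub>M UNIV (\<lambda>_. borel)) (\<lambda>\<omega> x. \<eta> x \<omega> - Min (range (\<lambda>y. \<eta> y \<omega>)))"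
      unfolding F_def ..
    finally show ?thesis .
  qed
  show ?thesis using part1 gauss part3 by blast
qed


end
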